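(* Let $H:\mathbb{R}\times\mathbb{R}^2\to\mathbb{R}^2$, $H(p,x)=(x_1-p,\,-x_2+x_2^2)$, $g:\mathbb{R}^2\to\mathbb{R}^2$, $g(x)=(0.5x_1-0.5x_1^2-x_2,\ 0.5x_1-0.5x_1^2+x_2)$, $D=\mathbb{R}^2_-$, $\Gamma=g^{-1}(D)$, and $S(p)=\{x\in\mathbb{R}^2\mid 0\in H(p,x)+\hat N_\Gamma(x)\}$. Then $S$ has the Aubin property around $(\bar p,\bar x)=(0,(0,0))$, and for every $q\in\mathbb{R}$, $DS(0,(0,0))(q)$ is the set of $u\in\mathbb{R}^2$ for which there exists $\xi\in\mathbb{R}^2$ with $$0=\begin{pmatrix}-q\\0\end{pmatrix}+\begin{pmatrix}u_1\\-u_2\end{pmatrix}+\begin{pmatrix}0.5&0.5\\-1&1\end{pmatrix}\xi,\qquad \xi\in N_{\mathbb{R}^2_-}\!\begin{pmatrix}0.5u_1-u_2\\0.5u_1+u_2\end{pmatrix}.$$ Explicitly, for $q\le0$ this set is $\{(q,0),(\tfrac43q,-\tfrac23q),(\tfrac43q,\tfrac23q)\}$ and for $q\ge0$ it is $\{(0,0)\}$.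
   Context: $\hat N_\Gamma$ is the regular (Fréchet) normal cone $\hat N_\Gamma(x)=(T_\Gamma(x))^\circ$ with $T_\Gamma(x)=\limsup_{t\searrow0}(\Gamma-x)/t$, and $\hat N_\Gamma(x)=\emptyset$ for $x\notin\Gamma$. $N_{\mathbb{R}^2_-}$ is the convex-analysis normal cone (empty outside $\mathbb{R}^2_-$). Aubin property of $S$ around $(\bar p,\bar x)$: there exist neighborhoods $U$ of $\bar p$, $V$ of $\bar x$ and $\kappa>0$ with $S(p_1)\cap V\subset S(p_2)+\kappa|p_1-p_2|\mathbb{B}$ for all $p_1,p_2\in U$. $DS(\bar p,\bar x)(q)=\{u\mid (q,u)\in T_{\operatorname{gph}S}(\bar p,\bar x)\}$ is the graphical derivative. *)

theory Defs
  imports "HOL-Analysis.Analysis"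
begin

text \<open>Bouligand (contingent) tangent cone, i.e. the outer limit
  limsup_{t \<searrow> 0} (\<Gamma> - x)/t, in its sequential form.\<close>
definition tangent_cone :: "'a::real_normed_vector set \<Rightarrow> 'a \<Rightarrow> 'a set" where
  "tangent_cone \<Gamma> x = {u. \<exists>t::nat \<Rightarrow> real. \<exists>w::nat \<Rightarrow> 'a.
      (\<forall>k. 0 < t k) \<and> t \<longlonglongrightarrow> 0 \<and> w \<longlonglongrightarrow> u \<and> (\<forall>k. w k \<in> (\<lambda>y. (1 / t k) *\<^sub>R (y - x)) ` \<Gamma>)}"

definition regular_normal_cone :: "'a::real_inner set \<Rightarrow> 'a \<Rightarrow> 'a set" where
  "regular_normal_cone \<Gamma> x =
     (if x \<in> \<Gamma> then {v. \<forall>u \<in> tangent_cone \<Gamma> x. inner v u \<le> 0} else {})"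

definition convex_normal_cone :: "'a::real_inner set \<Rightarrow> 'a \<Rightarrow> 'a set" where
  "convex_normal_cone C y =
     (if y \<in> C then {v. \<forall>z \<in> C. inner v (z - y) \<le> 0} else {})"

definition nonpos_orthant :: "(real \<times> real) set" where
  "nonpos_orthant = {y. fst y \<le> 0 \<and> snd y \<le> 0}"

definition graph_of :: "('a \<Rightarrow> 'b set) \<Rightarrow> ('a \<times> 'b) set" where
  "graph_of S = {(p, x). x \<in> S p}"

definition graphical_derivative ::
  "('a::real_normed_vector \<Rightarrow> 'b::real_normed_vector set) \<Rightarrow> 'a \<Rightarrow> 'b \<Rightarrow> 'a \<Rightarrow> 'b set" where
  "graphical_derivative S p x q = {u. (q, u) \<in> tangent_cone (graph_of S) (p, x)}"

definition aubin_property ::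
  "('a::real_normed_vector \<Rightarrow> 'b::real_normed_vector set) \<Rightarrow> 'a \<Rightarrow> 'b \<Rightarrow> bool" where
  "aubin_property S pb xb \<longleftrightarrow> (\<exists>U V \<kappa>. open U \<and> pb \<in> U \<and> open V \<and> xb \<in> V \<and> \<kappa> > 0 \<and>
      (\<forall>p1 \<in> U. \<forall>p2 \<in> U. \<forall>x \<in> S p1 \<inter> V.
         \<exists>y \<in> S p2. norm (x - y) \<le> \<kappa> * norm (p1 - p2)))"

definition H9 :: "real \<Rightarrow> real \<times> real \<Rightarrow> real \<times> real" where
  "H9 p x = (fst x - p, - snd x + (snd x)^2)"

definition g9 :: "real \<times> real \<Rightarrow> real \<times> real" where
  "g9 x = (0.5 * fst x - 0.5 * (fst x)^2 - snd x, 0.5 * fst x - 0.5 * (fst x)^2 + snd x)"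

definition Gamma9 :: "(real \<times> real) set" where
  "Gamma9 = g9 -` nonpos_orthant"

definition S9 :: "real \<Rightarrow> (real \<times> real) set" where
  "S9 p = {x. (0, 0) \<in> (\<lambda>v. H9 p x + v) ` regular_normal_cone Gamma9 x}"

end

theory Submission
  imports Defs
begin
definition G1 :: "real \<times> real \<Rightarrow> real" where "G1 x = fst (g9 x)"
definition G2 :: "real \<times> real \<Rightarrow> real" where "G2 x = snd (g9 x)"

lemma Gamma_iff: "x \<in> Gamma9 \<longleftrightarrow> G1 x \<le> 0 \<and> G2 x \<le> 0"
  by (simp add: Gamma9_def nonpos_orthant_def G1_def G2_def)

lemma G1_expand: "G1 (x + t *\<^sub>R u) = G1 x + t * ((1/2 - fst x) * fst u - snd u) - t^2 * (fst u)^2 / 2"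
  by (simp add: G1_def g9_def power2_eq_square algebra_simps)

lemma G2_expand: "G2 (x + t *\<^sub>R u) = G2 x + t * ((1/2 - fst x) * fst u + snd u) - t^2 * (fst u)^2 / 2"
  by (simp add: G2_def g9_def power2_eq_square algebra_simps)

lemma tc_suff:
  assumes "\<delta> > 0" "\<And>t. 0 < t \<Longrightarrow> t < \<delta> \<Longrightarrow> x + t *\<^sub>R u \<in> \<Gamma>"
  shows "u \<in> tangent_cone \<Gamma> x"
proof -
  define t where "t k = \<delta> / 2 * inverse (real (Suc k))" for k :: nat
  have tp: "t k > 0" for k using assms(1) unfolding t_def by simp
  have tl: "t k < \<delta>" for k
  proof -
    have "inverse (real (Suc k)) \<le> 1" by (rule inverse_le_1_iff[THEN iffD2]) simp
    hence "t k \<le> \<delta> / 2" unfolding t_def using assms(1) by (intro mult_left_le) auto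
    thus ?thesis using assms(1) by simp
  qed
  have "t \<longlonglongrightarrow> 0" unfolding t_def
    by (intro tendsto_mult_right_zero LIMSEQ_inverse_real_of_nat)
  moreover have "u \<in> (\<lambda>y. (1 / t k) *\<^sub>R (y - x)) ` \<Gamma>" for k
  proof
    show "x + t k *\<^sub>R u \<in> \<Gamma>" using assms(2) tp tl by blast
    show "u = (1 / t k) *\<^sub>R (x + t k *\<^sub>R u - x)" using tp[of k] by simp
  qed
  ultimately show ?thesis unfolding tangent_cone_def using tp
    by (intro CollectI exI[of _ t] exI[of _ "\<lambda>_. u"]) auto
qed

lemma G_step:
  assumes "G x \<le> 0" "G x < 0 \<or> d < 0"
    and exp: "\<And>t. G (x + t *\<^sub>R u) = G x + t * d - t^2 * c / 2" and c: "c \<ge> 0"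
  shows "\<exists>\<delta>>0. \<forall>t. 0 < t \<longrightarrow> t < \<delta> \<longrightarrow> G (x + t *\<^sub>R u) \<le> 0"
proof (cases "d < 0")
  case True
  show ?thesis
  proof (rule exI[of _ 1], intro conjI allI impI)
    fix t :: real assume "0 < t"
    hence "t * d < 0" using True by (simp add: mult_pos_neg)
    moreover have "t^2 * c / 2 \<ge> 0" using c by simp
    ultimately show "G (x + t *\<^sub>R u) \<le> 0" using assms(1) by (simp add: exp)
  qed simp
next
  case False
  with assms have g: "G x < 0" by auto
  define \<delta> where "\<delta> = - G x / (\<bar>d\<bar> + 1)"
  have dp: "\<delta> > 0" using g unfolding \<delta>_def by (intro divide_pos_pos) auto
  have "G (x + t *\<^sub>R u) \<le> 0" if "0 < t" "t < \<delta>" for t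
  proof -
    have "t * d \<le> t * \<bar>d\<bar>" using that by (simp add: mult_left_mono)
    also have "\<dots> \<le> \<delta> * \<bar>d\<bar>" using that by (simp add: mult_right_mono)
    also have "\<dots> \<le> - G x" using g unfolding \<delta>_def by (simp add: field_simps)
    finally have "t * d \<le> - G x" .
    moreover have "t^2 * c / 2 \<ge> 0" using c by simp
    ultimately show ?thesis by (simp add: exp)
  qed
  thus ?thesis using dp by blast
qed

lemma tc_Gamma:
  assumes "x \<in> Gamma9"
    and "G1 x < 0 \<or> (1/2 - fst x) * fst u - snd u < 0"
    and "G2 x < 0 \<or> (1/2 - fst x) * fst u + snd u < 0"
  shows "u \<in> tangent_cone Gamma9 x"
proof -
  obtain d1 where d1: "d1 > 0" "\<forall>t. 0 < t \<longrightarrow> t < d1 \<longrightarrow> G1 (x + t *\<^sub>R u) \<le> 0"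
    using G_step[of G1 x _ u "(fst u)^2", OF _ assms(2) G1_expand] assms(1) by (auto simp: Gamma_iff)
  obtain d2 where d2: "d2 > 0" "\<forall>t. 0 < t \<longrightarrow> t < d2 \<longrightarrow> G2 (x + t *\<^sub>R u) \<le> 0"
    using G_step[of G2 x _ u "(fst u)^2", OF _ assms(3) G2_expand] assms(1) by (auto simp: Gamma_iff)
  show ?thesis
    by (rule tc_suff[of "min d1 d2"]) (use d1 d2 in \<open>auto simp: Gamma_iff\<close>)
qed

lemma tc_lin:
  assumes u: "u \<in> tangent_cone Gamma9 x"
  shows "G1 x = 0 \<Longrightarrow> (1/2 - fst x) * fst u - snd u \<le> 0"
    and "G2 x = 0 \<Longrightarrow> (1/2 - fst x) * fst u + snd u \<le> 0"
proof -
  obtain t w where tw: "\<forall>k. 0 < t k" "t \<longlonglongrightarrow> 0" "w \<longlonglongrightarrow> u"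
    "\<forall>k. w k \<in> (\<lambda>y. (1 / t k) *\<^sub>R (y - x)) ` Gamma9"
    using u unfolding tangent_cone_def by blast
  have mem: "x + t k *\<^sub>R w k \<in> Gamma9" for k
  proof -
    obtain y where y: "y \<in> Gamma9" "w k = (1 / t k) *\<^sub>R (y - x)" using tw(4) by blast
    have "t k *\<^sub>R w k = y - x" using y(2) tw(1)[rule_format, of k] by (simp add: scaleR_scaleR)
    hence "x + t k *\<^sub>R w k = y" by (simp add: algebra_simps)
    thus ?thesis using y by simp
  qed
  have lim1: "(\<lambda>k. t k * (fst (w k))^2 / 2) \<longlonglongrightarrow> 0 * (fst u)^2 / 2"
    by (intro tendsto_divide tendsto_mult tendsto_power tendsto_fst tw tendsto_const) simp
  have lim2: "(\<lambda>k. (1/2 - fst x) * fst (w k) - snd (w k)) \<longlonglongrightarrow> (1/2 - fst x) * fst u - snd u"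
    by (intro tendsto_intros tw)
  have lim3: "(\<lambda>k. (1/2 - fst x) * fst (w k) + snd (w k)) \<longlonglongrightarrow> (1/2 - fst x) * fst u + snd u"
    by (intro tendsto_intros tw)
  show "(1/2 - fst x) * fst u - snd u \<le> 0" if "G1 x = 0"
  proof -
    have "(1/2 - fst x) * fst (w k) - snd (w k) \<le> t k * (fst (w k))^2 / 2" for k
    proof -
      have "G1 (x + t k *\<^sub>R w k) \<le> 0" using mem[of k] by (simp add: Gamma_iff)
      moreover have "G1 (x + t k *\<^sub>R w k) = t k * ((1/2 - fst x) * fst (w k) - snd (w k)) - t k * (t k * (fst (w k))^2 / 2)"
        using that by (simp add: G1_expand power2_eq_square)
      ultimately have "t k * ((1/2 - fst x) * fst (w k) - snd (w k)) \<le> t k * (t k * (fst (w k))^2 / 2)"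
        by linarith
      thus ?thesis using tw(1) by (simp add: mult_le_cancel_left)
    qed
    hence "(1/2 - fst x) * fst u - snd u \<le> 0 * (fst u)^2 / 2"
      by (intro LIMSEQ_le[OF lim2 lim1]) auto
    thus ?thesis by simp
  qed
  show "(1/2 - fst x) * fst u + snd u \<le> 0" if "G2 x = 0"
  proof -
    have "(1/2 - fst x) * fst (w k) + snd (w k) \<le> t k * (fst (w k))^2 / 2" for k
    proof -
      have "G2 (x + t k *\<^sub>R w k) \<le> 0" using mem[of k] by (simp add: Gamma_iff)
      moreover have "G2 (x + t k *\<^sub>R w k) = t k * ((1/2 - fst x) * fst (w k) + snd (w k)) - t k * (t k * (fst (w k))^2 / 2)"
        using that by (simp add: G2_expand power2_eq_square)
      ultimately have "t k * ((1/2 - fst x) * fst (w k) + snd (w k)) \<le> t k * (t k * (fst (w k))^2 / 2)"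
        by linarith
      thus ?thesis using tw(1) by (simp add: mult_le_cancel_left)
    qed
    hence "(1/2 - fst x) * fst u + snd u \<le> 0 * (fst u)^2 / 2"
      by (intro LIMSEQ_le[OF lim3 lim1]) auto
    thus ?thesis by simp
  qed
qed


definition phi :: "real \<Rightarrow> real" where "phi a = (a + a^2) / 2"
definition fL :: "real \<Rightarrow> real" where "fL a = - a + (phi a ^ 2 + phi a) * (1/2 + a)"
definition fU :: "real \<Rightarrow> real" where "fU a = - a + (phi a - phi a ^ 2) * (1/2 + a)"

lemma S9_iff: "x \<in> S9 p \<longleftrightarrow> x \<in> Gamma9 \<and>
   (\<forall>u \<in> tangent_cone Gamma9 x. (p - fst x) * fst u + (snd x - (snd x)^2) * snd u \<le> 0)"
proof -
  have "(0,0) \<in> (\<lambda>v. H9 p x + v) ` N \<longleftrightarrow> (p - fst x, snd x - (snd x)^2) \<in> N" for N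
  proof
    assume "(0,0) \<in> (\<lambda>v. H9 p x + v) ` N"
    then obtain v where "v \<in> N" "(0,0) = H9 p x + v" by blast
    moreover hence "v = (p - fst x, snd x - (snd x)^2)"
      by (cases v) (auto simp: H9_def)
    ultimately show "(p - fst x, snd x - (snd x)^2) \<in> N" by simp
  next
    assume "(p - fst x, snd x - (snd x)^2) \<in> N"
    moreover have "(0,0) = H9 p x + (p - fst x, snd x - (snd x)^2)" by (simp add: H9_def)
    ultimately show "(0,0) \<in> (\<lambda>v. H9 p x + v) ` N" by blast
  qed
  thus ?thesis unfolding S9_def regular_normal_cone_def
    by (auto simp: inner_prod_def)
qed

lemma mem_int: "p < 0 \<Longrightarrow> (p, 0) \<in> S9 p"
  unfolding S9_iff Gamma_iff G1_def G2_def g9_def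
  by (auto simp: power2_eq_square intro: mult_nonneg_nonneg)

lemma tc0: "u \<in> tangent_cone Gamma9 (0,0) \<Longrightarrow> fst u \<le> 0"
  using tc_lin[of u "(0,0)"] by (auto simp: G1_def G2_def g9_def)

lemma mem_0: "p \<ge> 0 \<Longrightarrow> (0, 0) \<in> S9 p"
  unfolding S9_iff using tc0
  by (auto simp: Gamma_iff G1_def G2_def g9_def intro: mult_nonneg_nonpos)

lemma mem_L: assumes "a \<ge> 0" shows "(-a, - phi a) \<in> S9 (fL a)"
proof -
  have G1: "G1 (-a, - phi a) = 0" by (simp add: G1_def g9_def phi_def field_simps)
  have G2: "G2 (-a, - phi a) \<le> 0" using assms by (simp add: G2_def g9_def phi_def field_simps) (smt (verit) zero_le_power2)
  have lam: "phi a ^ 2 + phi a \<ge> 0" using assms by (simp add: phi_def)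
  show ?thesis unfolding S9_iff
  proof (intro conjI ballI)
    show "(-a, - phi a) \<in> Gamma9" using G1 G2 by (simp add: Gamma_iff)
    fix u assume u: "u \<in> tangent_cone Gamma9 (-a, - phi a)"
    have "(1/2 + a) * fst u - snd u \<le> 0" using tc_lin(1)[OF u G1] by simp
    hence "(phi a ^ 2 + phi a) * ((1/2 + a) * fst u - snd u) \<le> 0"
      using lam by (simp add: mult_nonneg_nonpos)
    thus "(fL a - fst (-a, - phi a)) * fst u + (snd (-a, - phi a) - (snd (-a, - phi a))\<^sup>2) * snd u \<le> 0"
      by (simp add: fL_def algebra_simps power2_eq_square)
  qed
qed

lemma mem_U: assumes "a \<ge> 0" "a \<le> 1/2" shows "(-a, phi a) \<in> S9 (fU a)"
proof -
  have G2: "G2 (-a, phi a) = 0" by (simp add: G2_def g9_def phi_def field_simps)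
  have G1: "G1 (-a, phi a) \<le> 0" using assms by (simp add: G1_def g9_def phi_def field_simps) (smt (verit) zero_le_power2)
  have "a * a \<le> a * 1" using assms by (intro mult_left_mono) auto
  hence p0: "phi a \<ge> 0" "phi a \<le> 1" using assms unfolding phi_def
    by (auto simp: power2_eq_square)
  have "phi a * phi a \<le> phi a * 1" using p0 by (intro mult_left_mono) auto
  hence lam: "phi a - phi a ^ 2 \<ge> 0" by (simp add: power2_eq_square)
  show ?thesis unfolding S9_iff
  proof (intro conjI ballI)
    show "(-a, phi a) \<in> Gamma9" using G1 G2 by (simp add: Gamma_iff)
    fix u assume u: "u \<in> tangent_cone Gamma9 (-a, phi a)"
    have "(1/2 + a) * fst u + snd u \<le> 0" using tc_lin(2)[OF u G2] by simp
    hence "(phi a - phi a ^ 2) * ((1/2 + a) * fst u + snd u) \<le> 0"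
      using lam by (simp add: mult_nonneg_nonpos)
    thus "(fU a - fst (-a, phi a)) * fst u + (snd (-a, phi a) - (snd (-a, phi a))\<^sup>2) * snd u \<le> 0"
      by (simp add: fU_def algebra_simps power2_eq_square)
  qed
qed

lemma orth_zero:
  assumes "\<And>s::real. - c0 + s * c \<le> 0" shows "c = 0"
proof (rule ccontr)
  assume "c \<noteq> 0"
  have "- c0 + ((\<bar>c0\<bar> + 1) / c) * c \<le> 0" by (rule assms)
  hence "- c0 + (\<bar>c0\<bar> + 1) \<le> 0" using \<open>c \<noteq> 0\<close> by simp
  thus False by linarith
qed

lemma char:
  assumes x: "x \<in> S9 p" and b: "\<bar>fst x\<bar> < 1/10" "\<bar>snd x\<bar> < 1/10"
  shows "(x = (0,0) \<and> p \<ge> 0) \<or> (x = (p,0) \<and> p < 0)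
     \<or> (\<exists>a. 0 < a \<and> a < 1/10 \<and> x = (-a, - phi a) \<and> p = fL a)
     \<or> (\<exists>a. 0 < a \<and> a < 1/10 \<and> x = (-a, phi a) \<and> p = fU a)"
proof -
  obtain x1 x2 where xx: "x = (x1, x2)" by (cases x)
  have G: "x \<in> Gamma9" and N: "\<And>u. u \<in> tangent_cone Gamma9 x \<Longrightarrow> (p - x1) * fst u + (x2 - x2^2) * snd u \<le> 0"
    using x by (auto simp: S9_iff xx)
  have g1: "G1 x \<le> 0" and g2: "G2 x \<le> 0" using G by (auto simp: Gamma_iff)
  have G1e: "G1 x = x1/2 - x1^2/2 - x2" and G2e: "G2 x = x1/2 - x1^2/2 + x2"
    by (simp_all add: G1_def G2_def g9_def xx)
  have b1: "\<bar>x1\<bar> < 1/10" and b2: "\<bar>x2\<bar> < 1/10" using b by (simp_all add: xx)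
  consider "G1 x < 0" "G2 x < 0" | "G1 x = 0" "G2 x < 0" | "G1 x < 0" "G2 x = 0" | "G1 x = 0" "G2 x = 0"
    using g1 g2 by linarith
  thus ?thesis
  proof cases
    case 1
    have "(p - x1) * fst u + (x2 - x2^2) * snd u \<le> 0" for u
      by (rule N, rule tc_Gamma[OF G]) (use 1 in auto)
    from this[of "(1,0)"] this[of "(-1,0)"] this[of "(0,1)"] this[of "(0,-1)"]
    have "p = x1" "x2 - x2^2 = 0" by auto
    hence "x2 = 0" using b2 by (auto simp: power2_eq_square)
    moreover have "p < 0"
    proof (rule ccontr)
      assume "\<not> p < 0"
      hence x0: "x1 \<ge> 0" "x1 \<le> 1" using \<open>p = x1\<close> b1 by auto
      hence "x1 * x1 \<le> x1 * 1" by (intro mult_left_mono) auto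
      hence "x1/2 - x1^2/2 \<ge> 0" by (simp add: power2_eq_square)
      thus False using 1 G1e \<open>x2 = 0\<close> by simp
    qed
    ultimately show ?thesis using \<open>p = x1\<close> by (simp add: xx)
  next
    case 2
    define a where "a = - x1"
    have "x2 = x1/2 - x1*x1/2" using 2 G1e by (simp add: power2_eq_square)
    moreover have "phi a = (x1*x1 - x1)/2" by (simp add: phi_def a_def power2_eq_square)
    ultimately have x2e: "x2 = - phi a" by (simp add: field_simps)
    have "x1 - x1^2 < 0" using 2 G1e G2e by simp
    hence ap: "a > 0"
    proof -
      assume h: "x1 - x1^2 < 0"
      show "a > 0"
      proof (rule ccontr)
        assume "\<not> a > 0" hence "x1 \<ge> 0" "x1 \<le> 1" using b1 unfolding a_def by auto
        hence "x1 * x1 \<le> x1 * 1" by (intro mult_left_mono) auto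
        thus False using h by (simp add: power2_eq_square)
      qed
    qed
    have "- ((p - x1) * (1/2 - x1) - (x2 - x2^2)) + s * ((p - x1) + (x2 - x2^2) * (1/2 - x1)) \<le> 0" for s
    proof -
      have "(p - x1) * fst u + (x2 - x2^2) * snd u \<le> 0" if u: "u = (- (1/2 - x1) + s, 1 + s * (1/2 - x1))" for u
      proof (rule N, rule tc_Gamma[OF G])
        have "(1/2 - x1) * fst u - snd u = - ((1/2 - x1)^2 + 1)" by (simp add: u power2_eq_square field_simps)
        also have "\<dots> < 0" by (smt (verit) zero_le_power2)
        finally show "G1 x < 0 \<or> (1/2 - fst x) * fst u - snd u < 0" by (simp add: xx)
      qed (use 2 in auto)
      from this[OF refl] show ?thesis by (simp add: algebra_simps)
    qed
    from orth_zero[OF this] have "p = x1 - (x2 - x2^2) * (1/2 - x1)" by linarith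
    hence "p = fL a" unfolding fL_def using x2e a_def by (simp add: algebra_simps power2_eq_square)
    hence "\<exists>a. 0 < a \<and> a < 1/10 \<and> x = (-a, - phi a) \<and> p = fL a"
      using ap b1 x2e by (intro exI[of _ a]) (auto simp: xx a_def)
    thus ?thesis by blast
  next
    case 3
    define a where "a = - x1"
    have "x2 = - x1/2 + x1*x1/2" using 3 G2e by (simp add: power2_eq_square)
    moreover have "phi a = (x1*x1 - x1)/2" by (simp add: phi_def a_def power2_eq_square)
    ultimately have x2e: "x2 = phi a" by (simp add: field_simps)
    have "x1 - x1^2 < 0" using 3 G1e G2e by simp
    hence ap: "a > 0"
    proof -
      assume h: "x1 - x1^2 < 0"
      show "a > 0"
      proof (rule ccontr)
        assume "\<not> a > 0" hence "x1 \<ge> 0" "x1 \<le> 1" using b1 unfolding a_def by auto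
        hence "x1 * x1 \<le> x1 * 1" by (intro mult_left_mono) auto
        thus False using h by (simp add: power2_eq_square)
      qed
    qed
    have "- ((p - x1) * (1/2 - x1) + (x2 - x2^2)) + s * ((p - x1) - (x2 - x2^2) * (1/2 - x1)) \<le> 0" for s
    proof -
      have "(p - x1) * fst u + (x2 - x2^2) * snd u \<le> 0" if u: "u = (- (1/2 - x1) + s, - 1 - s * (1/2 - x1))" for u
      proof (rule N, rule tc_Gamma[OF G])
        have "(1/2 - x1) * fst u + snd u = - ((1/2 - x1)^2 + 1)" by (simp add: u power2_eq_square field_simps)
        also have "\<dots> < 0" by (smt (verit) zero_le_power2)
        finally show "G2 x < 0 \<or> (1/2 - fst x) * fst u + snd u < 0" by (simp add: xx)
      qed (use 3 in auto)
      from this[OF refl] show ?thesis by (simp add: algebra_simps)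
    qed
    from orth_zero[OF this] have "p = x1 + (x2 - x2^2) * (1/2 - x1)" by linarith
    hence "p = fU a" unfolding fU_def using x2e a_def by (simp add: algebra_simps power2_eq_square)
    hence "\<exists>a. 0 < a \<and> a < 1/10 \<and> x = (-a, phi a) \<and> p = fU a"
      using ap b1 x2e by (intro exI[of _ a]) (auto simp: xx a_def)
    thus ?thesis by blast
  next
    case 4
    have "x2 = 0" using 4 G1e G2e by simp
    hence "x1 - x1^2 = 0" using 4 G1e by simp
    hence "x1 = 0" using b1 by (auto simp: power2_eq_square)
    have "(p - x1) * fst u + (x2 - x2^2) * snd u \<le> 0" if "u = (-1, 0)" for u
      by (rule N, rule tc_Gamma[OF G]) (simp_all add: that xx \<open>x1 = 0\<close>)
    hence "p \<ge> 0" using \<open>x1 = 0\<close> by simp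
    thus ?thesis using \<open>x1 = 0\<close> \<open>x2 = 0\<close> by (simp add: xx)
  qed
qed

definition kL :: "real \<Rightarrow> real" where "kL a = phi a ^ 2 + phi a"
definition kU :: "real \<Rightarrow> real" where "kU a = phi a - phi a ^ 2"

lemma phi_bnd: assumes "0 \<le> a" "a \<le> 1/10" shows "0 \<le> phi a" "phi a \<le> 11/20 * a"
proof -
  have "a * a \<le> a * (1/10)" using assms by (intro mult_left_mono) auto
  thus "0 \<le> phi a" "phi a \<le> 11/20 * a" using assms by (auto simp: phi_def power2_eq_square)
qed

lemma phi_lip: assumes "0 \<le> a" "a \<le> 1/10" "0 \<le> b" "b \<le> 1/10"
  shows "\<bar>phi a - phi b\<bar> \<le> 3/5 * \<bar>a - b\<bar>"
proof -
  have e: "phi a - phi b = (a - b) * ((1 + a + b) / 2)" by (simp add: phi_def power2_eq_square field_simps)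
  have h1: "\<bar>phi a - phi b\<bar> = \<bar>a - b\<bar> * \<bar>(1 + a + b) / 2\<bar>" unfolding e abs_mult ..
  have h2: "\<bar>(1 + a + b) / 2\<bar> = (1 + a + b) / 2" using assms by simp
  have "\<bar>a - b\<bar> * ((1 + a + b) / 2) \<le> \<bar>a - b\<bar> * (3/5)" using assms by (intro mult_left_mono) auto
  thus ?thesis using h1 h2 by simp
qed

lemma abs_aux: "\<bar>E\<bar> \<le> 1/2 * \<bar>x\<bar> \<Longrightarrow> \<bar>x\<bar> \<le> 2 * \<bar>- x + (E::real)\<bar>" by (auto simp: abs_if split: if_split_asm)

lemma k_lip:
  assumes "0 \<le> a" "a \<le> 1/10" "0 \<le> b" "b \<le> 1/10"
  shows "\<bar>kL a - kL b\<bar> \<le> 7/10 * \<bar>a - b\<bar>" "\<bar>kU a - kU b\<bar> \<le> 7/10 * \<bar>a - b\<bar>"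
    "0 \<le> kL b" "kL b \<le> 3/50" "0 \<le> kU b" "kU b \<le> 3/50"
proof -
  note pa = phi_bnd[OF assms(1,2)] and pb = phi_bnd[OF assms(3,4)] and pl = phi_lip[OF assms]
  have "kL a - kL b = (phi a - phi b) * (phi a + phi b + 1)" by (simp add: kL_def power2_eq_square algebra_simps)
  hence "\<bar>kL a - kL b\<bar> = \<bar>phi a - phi b\<bar> * (phi a + phi b + 1)" using pa pb by (simp add: abs_mult)
  also have "\<dots> \<le> (3/5 * \<bar>a - b\<bar>) * (7/6)" using pa pb assms pl by (intro mult_mono) auto
  finally show "\<bar>kL a - kL b\<bar> \<le> 7/10 * \<bar>a - b\<bar>" by simp
  have "kU a - kU b = (phi a - phi b) * (1 - phi a - phi b)" by (simp add: kU_def power2_eq_square algebra_simps)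
  hence "\<bar>kU a - kU b\<bar> = \<bar>phi a - phi b\<bar> * \<bar>1 - phi a - phi b\<bar>" by (simp add: abs_mult)
  also have "\<dots> \<le> (3/5 * \<bar>a - b\<bar>) * 1" using pa pb assms pl by (intro mult_mono) auto
  finally show "\<bar>kU a - kU b\<bar> \<le> 7/10 * \<bar>a - b\<bar>" using abs_ge_zero[of "a - b"] by linarith
  have s1: "phi b * phi b \<le> phi b * 1" using pb assms by (intro mult_left_mono) auto
  have s2: "phi b * phi b \<le> (11/200) * (11/200)" using pb assms by (intro mult_mono) auto
  have s3: "phi b * phi b \<ge> 0" by simp
  have s4: "phi b \<le> 11/200" using pb assms by linarith
  have e1: "kL b = phi b * phi b + phi b" "kU b = phi b - phi b * phi b"
    by (simp_all add: kL_def kU_def power2_eq_square)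
  show "0 \<le> kL b" "kL b \<le> 3/50" "0 \<le> kU b" "kU b \<le> 3/50"
    unfolding e1 using s1 s2 s3 s4 pb by linarith+
qed

lemma h_lip:
  fixes k :: "real \<Rightarrow> real" and a b :: real
  assumes ab: "0 \<le> a" "a \<le> 1/10" "0 \<le> b" "b \<le> 1/10"
    and k: "\<bar>k a - k b\<bar> \<le> 7/10 * \<bar>a - b\<bar>" "0 \<le> k b" "k b \<le> 3/50"
  shows "\<bar>k a * (1/2 + a) - k b * (1/2 + b)\<bar> \<le> 1/2 * \<bar>a - b\<bar>"
proof -
  have e: "k a * (1/2 + a) - k b * (1/2 + b) = (k a - k b) * (1/2 + a) + k b * (a - b)"
    by (simp add: left_diff_distrib right_diff_distrib distrib_left distrib_right)
  have "\<bar>k a * (1/2 + a) - k b * (1/2 + b)\<bar> \<le> \<bar>(k a - k b) * (1/2 + a)\<bar> + \<bar>k b * (a - b)\<bar>"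
    unfolding e by (rule abs_triangle_ineq)
  also have "\<dots> = \<bar>k a - k b\<bar> * (1/2 + a) + k b * \<bar>a - b\<bar>"
    using ab k by (simp add: abs_mult)
  also have "\<dots> \<le> (7/10 * \<bar>a - b\<bar>) * (3/5) + (3/50) * \<bar>a - b\<bar>"
    using ab k by (intro add_mono mult_mono) auto
  finally have "\<bar>k a * (1/2 + a) - k b * (1/2 + b)\<bar> \<le> 12/25 * \<bar>a - b\<bar>" by simp
  thus ?thesis using abs_ge_zero[of "a - b"] by linarith
qed

lemma fL_eq: "fL a = - a + kL a * (1/2 + a)" by (simp add: fL_def kL_def)
lemma fU_eq: "fU a = - a + kU a * (1/2 + a)" by (simp add: fU_def kU_def)

lemma f_lip:
  assumes "0 \<le> a" "a \<le> 1/10" "0 \<le> b" "b \<le> 1/10"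
  shows "\<bar>a - b\<bar> \<le> 2 * \<bar>fL a - fL b\<bar>" "\<bar>a - b\<bar> \<le> 2 * \<bar>fU a - fU b\<bar>"
proof -
  note k = k_lip[OF assms]
  have "\<bar>kL a * (1/2 + a) - kL b * (1/2 + b)\<bar> \<le> 1/2 * \<bar>a - b\<bar>"
    by (rule h_lip[OF assms]) (use k in auto)
  moreover have "fL a - fL b = - (a - b) + (kL a * (1/2 + a) - kL b * (1/2 + b))"
    unfolding fL_eq by simp
  ultimately show "\<bar>a - b\<bar> \<le> 2 * \<bar>fL a - fL b\<bar>" using abs_aux by presburger
  have "\<bar>kU a * (1/2 + a) - kU b * (1/2 + b)\<bar> \<le> 1/2 * \<bar>a - b\<bar>"
    by (rule h_lip[OF assms]) (use k in auto)
  moreover have "fU a - fU b = - (a - b) + (kU a * (1/2 + a) - kU b * (1/2 + b))"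
    unfolding fU_eq by simp
  ultimately show "\<bar>a - b\<bar> \<le> 2 * \<bar>fU a - fU b\<bar>" using abs_aux by presburger
qed

lemma f_neg:
  assumes "0 \<le> a" "a \<le> 1/10"
  shows "fL a \<le> - a / 2" "fU a \<le> - a / 2" "- a \<le> fL a" "- a \<le> fU a"
proof -
  have z: "(0::real) \<le> 0" "(0::real) \<le> 1/10" by auto
  note k = k_lip[OF assms z] k_lip[OF z assms]
  have "kL 0 = 0" "kU 0 = 0" by (simp_all add: kL_def kU_def phi_def)
  have "\<bar>kL a * (1/2 + a) - kL 0 * (1/2 + 0)\<bar> \<le> 1/2 * \<bar>a - 0\<bar>"
    by (rule h_lip[OF assms z]) (use k in auto)
  moreover have "\<bar>kU a * (1/2 + a) - kU 0 * (1/2 + 0)\<bar> \<le> 1/2 * \<bar>a - 0\<bar>"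
    by (rule h_lip[OF assms z]) (use k in auto)
  moreover have "kL a * (1/2 + a) \<ge> 0" "kU a * (1/2 + a) \<ge> 0" using k assms by auto
  ultimately show "fL a \<le> - a / 2" "fU a \<le> - a / 2" "- a \<le> fL a" "- a \<le> fU a"
    using assms \<open>kL 0 = 0\<close> \<open>kU 0 = 0\<close> unfolding fL_eq fU_eq by auto
qed

lemma f_cont: "continuous_on S fL" "continuous_on S fU"
  unfolding fL_def fU_def phi_def by (auto intro!: continuous_intros)

lemma f_zero: "fL 0 = 0" "fU 0 = 0" by (simp_all add: fL_def fU_def phi_def)

lemma exL: assumes "-1/20 < p" "p < 0" shows "\<exists>b. 0 \<le> b \<and> b \<le> 1/10 \<and> fL b = p"
proof -
  have "fL (1/10) \<le> p" using f_neg(1)[of "1/10"] assms by simp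
  moreover have "p \<le> fL 0" using assms f_zero by simp
  ultimately show ?thesis using IVT2'[of fL "1/10" p 0] f_cont by auto
qed

lemma exU: assumes "-1/20 < p" "p < 0" shows "\<exists>b. 0 \<le> b \<and> b \<le> 1/10 \<and> fU b = p"
proof -
  have "fU (1/10) \<le> p" using f_neg(2)[of "1/10"] assms by simp
  moreover have "p \<le> fU 0" using assms f_zero by simp
  ultimately show ?thesis using IVT2'[of fU "1/10" p 0] f_cont by auto
qed

lemma normP: "norm ((u::real, v::real)) \<le> \<bar>u\<bar> + \<bar>v\<bar>"
  using norm_Pair_le[of u v] by simp

lemma branch_dist:
  assumes "0 \<le> a" "a \<le> 1/10" "0 \<le> b" "b \<le> 1/10"
  shows "norm ((-a, - phi a) - (-b, - phi b)) \<le> 2 * \<bar>a - b\<bar>"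
    "norm ((-a, phi a) - (-b, phi b)) \<le> 2 * \<bar>a - b\<bar>"
proof -
  have "norm ((-a, - phi a) - (-b, - phi b)) \<le> \<bar>b - a\<bar> + \<bar>phi b - phi a\<bar>"
    using normP[of "b - a" "phi b - phi a"] by simp
  thus "norm ((-a, - phi a) - (-b, - phi b)) \<le> 2 * \<bar>a - b\<bar>"
    using phi_lip[OF assms] abs_minus_commute[of b a] abs_minus_commute[of "phi b" "phi a"] abs_ge_zero[of "a - b"] by linarith
  have "norm ((-a, phi a) - (-b, phi b)) \<le> \<bar>b - a\<bar> + \<bar>phi a - phi b\<bar>"
    using normP[of "b - a" "phi a - phi b"] by simp
  thus "norm ((-a, phi a) - (-b, phi b)) \<le> 2 * \<bar>a - b\<bar>"
    using phi_lip[OF assms] abs_minus_commute[of b a] abs_minus_commute[of "phi b" "phi a"] abs_ge_zero[of "a - b"] by linarith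
qed

lemma branch_norm:
  assumes "0 \<le> a" "a \<le> 1/10"
  shows "norm ((-a, - phi a) - (0,0)) \<le> 2 * a" "norm ((-a, phi a) - (0,0)) \<le> 2 * a"
  using branch_dist[OF assms, of 0] assms by (auto simp: phi_def)

lemma aubin_step:
  assumes x: "x \<in> S9 p1" and b: "\<bar>fst x\<bar> < 1/10" "\<bar>snd x\<bar> < 1/10" and p2: "\<bar>p2\<bar> < 1/20"
  shows "\<exists>y \<in> S9 p2. norm (x - y) \<le> 4 * \<bar>p1 - p2\<bar>"
proof -
  from char[OF x b] consider "x = (0,0)" "p1 \<ge> 0" | "x = (p1,0)" "p1 < 0"
    | a where "0 < a" "a < 1/10" "x = (-a, - phi a)" "p1 = fL a"
    | a where "0 < a" "a < 1/10" "x = (-a, phi a)" "p1 = fU a"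
    by blast
  thus ?thesis
  proof cases
    case 1
    show ?thesis
    proof (cases "p2 \<ge> 0")
      case True thus ?thesis using mem_0[of p2] 1 by (intro bexI[of _ "(0,0)"]) auto
    next
      case False
      hence "norm (x - (p2, 0)) \<le> 4 * \<bar>p1 - p2\<bar>" using 1 by auto
      thus ?thesis using mem_int[of p2] False by (intro bexI[of _ "(p2,0)"]) auto
    qed
  next
    case 2
    show ?thesis
    proof (cases "p2 \<ge> 0")
      case True
      hence "norm (x - (0, 0)) \<le> 4 * \<bar>p1 - p2\<bar>" using 2 by auto
      thus ?thesis using mem_0[of p2] True by blast
    next
      case False
      hence "norm (x - (p2, 0)) \<le> 4 * \<bar>p1 - p2\<bar>" using 2 by auto
      thus ?thesis using mem_int[of p2] False by (intro bexI[of _ "(p2,0)"]) auto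
    qed
  next
    case (3 a)
    have fa: "fL a \<le> - a / 2" using f_neg[of a] 3 by auto
    show ?thesis
    proof (cases "p2 \<ge> 0")
      case True
      have "norm (x - (0, 0)) \<le> 2 * a" using branch_norm[of a] 3 by auto
      also have "\<dots> \<le> 4 * \<bar>p1 - p2\<bar>" using fa True 3 by auto
      finally show ?thesis using mem_0[of p2] True by blast
    next
      case False
      then obtain c where c: "0 \<le> c" "c \<le> 1/10" "fL c = p2" using exL[of p2] p2 by auto
      have "norm (x - (-c, - phi c)) \<le> 2 * \<bar>a - c\<bar>" using branch_dist(1)[of a c] 3 c by auto
      also have "\<dots> \<le> 4 * \<bar>p1 - p2\<bar>" using f_lip(1)[of a c] 3 c by auto
      finally show ?thesis using mem_L[of c] c by blast
    qed
  next
    case (4 a)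
    have fa: "fU a \<le> - a / 2" using f_neg[of a] 4 by auto
    show ?thesis
    proof (cases "p2 \<ge> 0")
      case True
      have "norm (x - (0, 0)) \<le> 2 * a" using branch_norm[of a] 4 by auto
      also have "\<dots> \<le> 4 * \<bar>p1 - p2\<bar>" using fa True 4 by auto
      finally show ?thesis using mem_0[of p2] True by blast
    next
      case False
      then obtain c where c: "0 \<le> c" "c \<le> 1/10" "fU c = p2" using exU[of p2] p2 by auto
      have "norm (x - (-c, phi c)) \<le> 2 * \<bar>a - c\<bar>" using branch_dist(2)[of a c] 4 c by auto
      also have "\<dots> \<le> 4 * \<bar>p1 - p2\<bar>" using f_lip(2)[of a c] 4 c by auto
      finally show ?thesis using mem_U[of c] c by (intro bexI[of _ "(-c, phi c)"]) auto
    qed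
  qed
qed

lemma aubin: "aubin_property S9 0 (0, 0)"
proof -
  have "\<forall>p1 \<in> ball 0 (1/20). \<forall>p2 \<in> ball 0 (1/20). \<forall>x \<in> S9 p1 \<inter> ball (0,0) (1/10).
         \<exists>y \<in> S9 p2. norm (x - y) \<le> 4 * norm (p1 - p2)"
  proof (intro ballI)
    fix p1 p2 :: real and x assume p: "p1 \<in> ball 0 (1/20)" "p2 \<in> ball 0 (1/20)"
      and x: "x \<in> S9 p1 \<inter> ball (0,0) (1/10)"
    have "dist (0,0) x = norm x" by (metis dist_0_norm zero_prod_def)
    hence "norm x < 1/10" using x by auto
    moreover have "\<bar>fst x\<bar> \<le> norm x" "\<bar>snd x\<bar> \<le> norm x"
      using norm_fst_le[of "fst x" "snd x"] norm_snd_le[of "snd x" "fst x"] by auto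
    ultimately have b: "\<bar>fst x\<bar> < 1/10" "\<bar>snd x\<bar> < 1/10" by auto
    have "\<bar>p2\<bar> < 1/20" using p by auto
    from aubin_step[OF _ b this] x show "\<exists>y\<in>S9 p2. norm (x - y) \<le> 4 * norm (p1 - p2)" by auto
  qed
  thus ?thesis unfolding aubin_property_def
    by (intro exI[of _ "ball 0 (1/20)"] exI[of _ "ball (0,0) (1/10)"] exI[of _ 4]) auto
qed

definition Eset :: "real \<Rightarrow> (real \<times> real) set" where
  "Eset q = (if q \<le> 0 then {(q, 0), (4/3 * q, - (2/3) * q), (4/3 * q, 2/3 * q)} else {(0, 0)})"

definition dd :: "real \<Rightarrow> real \<Rightarrow> real \<Rightarrow> real \<Rightarrow> real \<times> real \<Rightarrow> real" where
  "dd c1 c2 s p x = \<bar>fst x - c1 * p\<bar> + \<bar>snd x - c2 * p\<bar> + max (s * p) 0"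

definition mm :: "real \<Rightarrow> real \<times> real \<Rightarrow> real" where
  "mm p x = min (min (dd 0 0 (-1) p x) (dd 1 0 1 p x)) (min (dd (4/3) (2/3) 1 p x) (dd (4/3) (-(2/3)) 1 p x))"

lemma dd_nonneg: "dd c1 c2 s p x \<ge> 0" by (simp add: dd_def)

lemma mm_nonneg: "mm p x \<ge> 0" by (simp add: mm_def dd_nonneg)

lemma dd_homog: "t > 0 \<Longrightarrow> dd c1 c2 s (t * p) (t *\<^sub>R x) = t * dd c1 c2 s p x"
proof -
  assume t: "t > 0"
  have "t * fst x - c1 * (t * p) = t * (fst x - c1 * p)" "t * snd x - c2 * (t * p) = t * (snd x - c2 * p)"
    by (simp_all add: algebra_simps)
  hence "\<bar>t * fst x - c1 * (t * p)\<bar> = t * \<bar>fst x - c1 * p\<bar>"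
    "\<bar>t * snd x - c2 * (t * p)\<bar> = t * \<bar>snd x - c2 * p\<bar>"
    using t by (simp_all add: abs_mult)
  moreover have "max (s * (t * p)) 0 = t * max (s * p) 0"
    using t by (simp add: max_mult_distrib_left mult.left_commute)
  ultimately show ?thesis by (simp add: dd_def distrib_left)
qed

lemma mm_homog: "t > 0 \<Longrightarrow> mm (t * p) (t *\<^sub>R x) = t * mm p x"
  by (simp add: mm_def dd_homog min_mult_distrib_left)

lemma mm_zero: assumes "mm q u = 0" shows "u \<in> Eset q"
proof -
  obtain u1 u2 where u: "u = (u1, u2)" by (cases u)
  have "dd 0 0 (-1) q u = 0 \<or> dd 1 0 1 q u = 0 \<or> dd (4/3) (2/3) 1 q u = 0 \<or> dd (4/3) (-(2/3)) 1 q u = 0"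
    using assms dd_nonneg[of 0 0 "-1" q u] dd_nonneg[of 1 0 1 q u] dd_nonneg[of "4/3" "2/3" 1 q u]
      dd_nonneg[of "4/3" "-(2/3)" 1 q u]
    unfolding mm_def by linarith
  thus ?thesis
  proof (elim disjE)
    assume h: "dd 0 0 (-1) q u = 0"
    hence "u1 = 0" "u2 = 0" "q \<ge> 0" unfolding dd_def u
      by (smt (verit, best) abs_ge_zero fst_conv max.cobounded2 snd_conv)+
    thus ?thesis by (simp add: Eset_def u)
  next
    assume h: "dd 1 0 1 q u = 0"
    hence "u1 = q" "u2 = 0" "q \<le> 0" unfolding dd_def u
      by (smt (verit, best) abs_ge_zero fst_conv max.cobounded2 snd_conv max.cobounded1)+
    thus ?thesis by (simp add: Eset_def u)
  next
    assume h: "dd (4/3) (2/3) 1 q u = 0"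
    hence "u1 = 4/3 * q" "u2 = 2/3 * q" "q \<le> 0" unfolding dd_def u
      by (smt (verit, best) abs_ge_zero fst_conv max.cobounded2 snd_conv max.cobounded1)+
    thus ?thesis by (simp add: Eset_def u)
  next
    assume h: "dd (4/3) (-(2/3)) 1 q u = 0"
    hence "u1 = 4/3 * q" "u2 = - (2/3) * q" "q \<le> 0" unfolding dd_def u
      by (smt (verit, best) abs_ge_zero fst_conv max.cobounded2 snd_conv max.cobounded1)+
    thus ?thesis by (simp add: Eset_def u)
  qed
qed

definition QL :: "real \<Rightarrow> real" where "QL a = phi a * a + phi a ^ 2 * (1/2 + a)"
definition QU :: "real \<Rightarrow> real" where "QU a = phi a * a - phi a ^ 2 * (1/2 + a)"

lemma Q_ids:
  "- a - 4/3 * fL a = - (a^2 / 3) - 4/3 * QL a"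
  "- phi a - 2/3 * fL a = - (2/3 * a^2) - 2/3 * QL a"
  "- a - 4/3 * fU a = - (a^2 / 3) - 4/3 * QU a"
  "phi a + 2/3 * fU a = 2/3 * a^2 + 2/3 * QU a"
  by (simp_all add: fL_def fU_def QL_def QU_def phi_def power2_eq_square field_simps)

lemma Q_bnd: assumes "0 \<le> a" "a \<le> 1/10"
  shows "\<bar>QL a\<bar> \<le> a^2" "\<bar>QU a\<bar> \<le> a^2"
proof -
  note pb = phi_bnd[OF assms]
  have 1: "phi a * a \<le> (11/20 * a) * a" using pb assms by (intro mult_right_mono) auto
  have 2: "phi a * phi a \<le> (11/20 * a) * (11/20 * a)" using pb assms by (intro mult_mono) auto
  have 3: "phi a ^ 2 * (1/2 + a) \<le> ((11/20 * a) * (11/20 * a)) * (3/5)"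
    unfolding power2_eq_square using 2 pb assms by (intro mult_mono) auto
  have 4: "0 \<le> phi a * a" "0 \<le> phi a ^ 2 * (1/2 + a)" using pb assms by auto
  show "\<bar>QL a\<bar> \<le> a^2" "\<bar>QU a\<bar> \<le> a^2" using 1 3 4 unfolding QL_def QU_def
    by (auto simp: power2_eq_square)
qed

lemma mm_bound:
  assumes x: "x \<in> S9 p" and b: "\<bar>fst x\<bar> < 1/10" "\<bar>snd x\<bar> < 1/10"
  shows "mm p x \<le> 4 * (\<bar>fst x\<bar> + \<bar>snd x\<bar>)^2"
proof -
  have z: "0 \<le> 4 * (\<bar>fst x\<bar> + \<bar>snd x\<bar>)^2" by simp
  from char[OF x b] consider "x = (0,0)" "p \<ge> 0" | "x = (p,0)" "p < 0"
    | a where "0 < a" "a < 1/10" "x = (-a, - phi a)" "p = fL a"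
    | a where "0 < a" "a < 1/10" "x = (-a, phi a)" "p = fU a"
    by blast
  thus ?thesis
  proof cases
    case 1
    hence "dd 0 0 (-1) p x = 0" by (simp add: dd_def)
    thus ?thesis using z unfolding mm_def by linarith
  next
    case 2
    hence "dd 1 0 1 p x = 0" by (simp add: dd_def)
    thus ?thesis using z unfolding mm_def by linarith
  next
    case (3 a)
    have fa: "fL a \<le> 0" using f_neg[of a] 3 by auto
    have "dd (4/3) (2/3) 1 p x = \<bar>- a - 4/3 * fL a\<bar> + \<bar>- phi a - 2/3 * fL a\<bar>"
      using 3 fa by (simp add: dd_def)
    also have "\<dots> = \<bar>- (a^2 / 3) - 4/3 * QL a\<bar> + \<bar>- (2/3 * a^2) - 2/3 * QL a\<bar>" by (simp only: Q_ids)
    also have "\<dots> \<le> 4 * a^2" using Q_bnd[of a] 3 unfolding abs_le_iff by (auto simp: abs_if)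
    also have "\<dots> \<le> 4 * (\<bar>fst x\<bar> + \<bar>snd x\<bar>)^2" using 3 by (auto intro!: power_mono)
    finally show ?thesis unfolding mm_def by linarith
  next
    case (4 a)
    have fa: "fU a \<le> 0" using f_neg[of a] 4 by auto
    have "dd (4/3) (-(2/3)) 1 p x = \<bar>- a - 4/3 * fU a\<bar> + \<bar>phi a + 2/3 * fU a\<bar>"
      using 4 fa by (simp add: dd_def)
    also have "\<dots> = \<bar>- (a^2 / 3) - 4/3 * QU a\<bar> + \<bar>2/3 * a^2 + 2/3 * QU a\<bar>" by (simp only: Q_ids)
    also have "\<dots> \<le> 4 * a^2" using Q_bnd[of a] 4 unfolding abs_le_iff by (auto simp: abs_if)
    also have "\<dots> \<le> 4 * (\<bar>fst x\<bar> + \<bar>snd x\<bar>)^2" using 4 by (auto intro!: power_mono)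
    finally show ?thesis unfolding mm_def by linarith
  qed
qed

lemma z0: "(0::real, (0::real, 0::real)) = 0" by (simp add: zero_prod_def)

lemma gd_intro:
  assumes t: "\<And>k. 0 < t k" "t \<longlonglongrightarrow> 0" and w: "w \<longlonglongrightarrow> (q, u)"
    and mem: "\<And>k. snd (t k *\<^sub>R w k) \<in> S9 (fst (t k *\<^sub>R w k))"
  shows "u \<in> graphical_derivative S9 0 (0,0) q"
  unfolding graphical_derivative_def tangent_cone_def
proof (intro CollectI exI[of _ t] exI[of _ w] conjI allI)
  fix k
  have "t k *\<^sub>R w k \<in> graph_of S9" using mem[of k] unfolding graph_of_def
    by (cases "t k *\<^sub>R w k") auto
  moreover have "w k = (1 / t k) *\<^sub>R (t k *\<^sub>R w k - (0, 0, 0))" using t(1)[of k] by (simp add: z0)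
  ultimately show "w k \<in> (\<lambda>y. (1 / t k) *\<^sub>R (y - (0, 0, 0))) ` graph_of S9" by blast
qed (use t w in auto)

lemma gd_sub:
  assumes u: "u \<in> graphical_derivative S9 0 (0,0) q"
  shows "u \<in> Eset q"
proof -
  obtain t w where tw: "\<forall>k. 0 < t k" "t \<longlonglongrightarrow> 0" "w \<longlonglongrightarrow> (q, u)"
    "\<forall>k. w k \<in> (\<lambda>y. (1 / t k) *\<^sub>R (y - (0, 0, 0))) ` graph_of S9"
    using u unfolding graphical_derivative_def tangent_cone_def by blast
  have mem: "snd (t k *\<^sub>R w k) \<in> S9 (fst (t k *\<^sub>R w k))" for k
  proof -
    obtain y where y: "y \<in> graph_of S9" "w k = (1 / t k) *\<^sub>R (y - (0, 0, 0))" using tw(4) by blast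
    have "t k *\<^sub>R w k = y" using y(2) tw(1)[rule_format, of k] by (simp add: scaleR_scaleR z0)
    thus ?thesis using y(1) unfolding graph_of_def by (cases y) auto
  qed
  have w1: "(\<lambda>k. fst (w k)) \<longlonglongrightarrow> q" and w2: "(\<lambda>k. snd (w k)) \<longlonglongrightarrow> u"
    using tendsto_fst[OF tw(3)] tendsto_snd[OF tw(3)] by simp_all
  define S where "S k = \<bar>fst (snd (w k))\<bar> + \<bar>snd (snd (w k))\<bar>" for k
  have Slim: "S \<longlonglongrightarrow> \<bar>fst u\<bar> + \<bar>snd u\<bar>" unfolding S_def
    by (intro tendsto_intros w2)
  have tS: "(\<lambda>k. t k * S k) \<longlonglongrightarrow> 0 * (\<bar>fst u\<bar> + \<bar>snd u\<bar>)"
    by (intro tendsto_mult tw Slim)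
  hence ev: "eventually (\<lambda>k. t k * S k < 1/10) sequentially"
    by (intro order_tendstoD(2)) auto
  have ev2: "eventually (\<lambda>k. mm (fst (w k)) (snd (w k)) \<le> 4 * t k * (S k)^2) sequentially"
  proof (rule eventually_mono[OF ev])
    fix k assume k: "t k * S k < 1/10"
    have tp: "t k > 0" using tw(1) by auto
    have a1: "\<bar>fst (snd (t k *\<^sub>R w k))\<bar> = t k * \<bar>fst (snd (w k))\<bar>"
      "\<bar>snd (snd (t k *\<^sub>R w k))\<bar> = t k * \<bar>snd (snd (w k))\<bar>" using tp by (simp_all add: abs_mult)
    have s0: "0 \<le> t k * \<bar>fst (snd (w k))\<bar>" "0 \<le> t k * \<bar>snd (snd (w k))\<bar>" using tp by simp_all
    have "t k * S k = t k * \<bar>fst (snd (w k))\<bar> + t k * \<bar>snd (snd (w k))\<bar>"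
      unfolding S_def by (simp add: distrib_left)
    hence b: "\<bar>fst (snd (t k *\<^sub>R w k))\<bar> < 1/10" "\<bar>snd (snd (t k *\<^sub>R w k))\<bar> < 1/10"
      using k a1 s0 by linarith+
    have "mm (fst (t k *\<^sub>R w k)) (snd (t k *\<^sub>R w k)) \<le> 4 * (t k * S k)^2"
      using mm_bound[OF mem b] a1 unfolding S_def by (simp add: distrib_left)
    moreover have "mm (fst (t k *\<^sub>R w k)) (snd (t k *\<^sub>R w k)) = t k * mm (fst (w k)) (snd (w k))"
      using mm_homog[OF tp] by simp
    ultimately have "t k * mm (fst (w k)) (snd (w k)) \<le> t k * (4 * t k * (S k)^2)"
      by (simp add: power2_eq_square algebra_simps)
    thus "mm (fst (w k)) (snd (w k)) \<le> 4 * t k * (S k)^2" using tp by simp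
  qed
  have lim1: "(\<lambda>k. mm (fst (w k)) (snd (w k))) \<longlonglongrightarrow> mm q u"
  proof -
    have "(\<lambda>k. mm (fst (w k)) (snd (w k))) \<longlonglongrightarrow> mm (fst (q, u)) (snd (q, u))"
      unfolding mm_def dd_def by (intro tendsto_intros w1 w2 tw(3))
    thus ?thesis by simp
  qed
  have lim2: "(\<lambda>k. 4 * t k * (S k)^2) \<longlonglongrightarrow> 4 * 0 * (\<bar>fst u\<bar> + \<bar>snd u\<bar>)^2"
    by (intro tendsto_intros tw Slim)
  have "mm q u \<le> 4 * 0 * (\<bar>fst u\<bar> + \<bar>snd u\<bar>)^2"
    by (rule tendsto_le[OF trivial_limit_sequentially lim2 lim1 ev2])
  hence "mm q u = 0" using mm_nonneg[of q u] by simp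
  thus ?thesis by (rule mm_zero)
qed

lemma phi_ct: "t * (c * (1 + c * t) / 2) = phi (c * t)"
  by (simp add: phi_def power2_eq_square algebra_simps)
lemma fL_alt: "fL a = - a + phi a * (phi a + 1) * (1/2 + a)"
  by (simp add: fL_def power2_eq_square algebra_simps)
lemma fU_alt: "fU a = - a + phi a * (1 - phi a) * (1/2 + a)"
  by (simp add: fU_def power2_eq_square algebra_simps)

lemma inv_seq: "(\<lambda>k. s * inverse (real (Suc k))) \<longlonglongrightarrow> 0"
  by (intro tendsto_mult_right_zero LIMSEQ_inverse_real_of_nat)

lemma gd_simple:
  assumes "\<And>t. t > 0 \<Longrightarrow> t *\<^sub>R u \<in> S9 (t * q)"
  shows "u \<in> graphical_derivative S9 0 (0,0) q"
proof (rule gd_intro[of "\<lambda>k. 1 * inverse (real (Suc k))" "\<lambda>k. (q, u)"])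
  show "(\<lambda>k. 1 * inverse (real (Suc k))) \<longlonglongrightarrow> 0" by (rule inv_seq)
qed (use assms in auto)

lemma gd_branch:
  assumes q: "q \<le> 0"
  shows "(4/3 * q, 2/3 * q) \<in> graphical_derivative S9 0 (0,0) q"
    "(4/3 * q, - (2/3) * q) \<in> graphical_derivative S9 0 (0,0) q"
proof -
  define c where "c = - 4/3 * q"
  have c0: "c \<ge> 0" using q by (simp add: c_def)
  define s where "s = 1 / (10 * (c + 1))"
  have s0: "s > 0" using c0 by (simp add: s_def)
  define t where "t k = s * inverse (real (Suc k))" for k
  have tp: "t k > 0" for k using s0 by (simp add: t_def)
  have tl: "t \<longlonglongrightarrow> 0" unfolding t_def by (rule inv_seq)
  have ab: "0 \<le> c * t k" "c * t k \<le> 1/10" for k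
  proof -
    show "0 \<le> c * t k" using c0 tp[of k] by simp
    have "t k \<le> s" unfolding t_def using s0 by (intro mult_left_le) (auto intro: inverse_le_1_iff[THEN iffD2])
    hence "c * t k \<le> c * s" using c0 by (intro mult_left_mono) auto
    also have "c * s \<le> 1/10" using c0 by (simp add: s_def field_simps)
    finally show "c * t k \<le> 1/10" .
  qed
  define wL where "wL k = (- c + (c * (1 + c * t k) / 2) * (phi (c * t k) + 1) * (1/2 + c * t k),
      (- c, - (c * (1 + c * t k) / 2)))" for k
  define wU where "wU k = (- c + (c * (1 + c * t k) / 2) * (1 - phi (c * t k)) * (1/2 + c * t k),
      (- c, c * (1 + c * t k) / 2))" for k
  have sL: "t k *\<^sub>R wL k = (fL (c * t k), (- (c * t k), - phi (c * t k)))" for k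
  proof -
    have "t k * (- c + (c * (1 + c * t k) / 2) * (phi (c * t k) + 1) * (1/2 + c * t k))
      = - (c * t k) + (t k * (c * (1 + c * t k) / 2)) * (phi (c * t k) + 1) * (1/2 + c * t k)"
      by (simp add: algebra_simps)
    also have "\<dots> = fL (c * t k)" unfolding phi_ct fL_alt ..
    finally show ?thesis unfolding wL_def using phi_ct[of "t k" c] by (simp add: algebra_simps)
  qed
  have sU: "t k *\<^sub>R wU k = (fU (c * t k), (- (c * t k), phi (c * t k)))" for k
  proof -
    have "t k * (- c + (c * (1 + c * t k) / 2) * (1 - phi (c * t k)) * (1/2 + c * t k))
      = - (c * t k) + (t k * (c * (1 + c * t k) / 2)) * (1 - phi (c * t k)) * (1/2 + c * t k)"
      by (simp add: algebra_simps)
    also have "\<dots> = fU (c * t k)" unfolding phi_ct fU_alt ..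
    finally show ?thesis unfolding wU_def using phi_ct[of "t k" c] by (simp add: algebra_simps)
  qed
  have phl: "(\<lambda>k. phi (c * t k)) \<longlonglongrightarrow> phi (c * 0)"
    unfolding phi_def by (intro tendsto_intros tl; simp)
  have limL: "wL \<longlonglongrightarrow> (- c + (c * (1 + c * 0) / 2) * (phi (c * 0) + 1) * (1/2 + c * 0),
      (- c, - (c * (1 + c * 0) / 2)))"
    unfolding wL_def by (intro tendsto_intros tl phl; simp)
  have limU: "wU \<longlonglongrightarrow> (- c + (c * (1 + c * 0) / 2) * (1 - phi (c * 0)) * (1/2 + c * 0),
      (- c, c * (1 + c * 0) / 2))"
    unfolding wU_def by (intro tendsto_intros tl phl; simp)
  show "(4/3 * q, 2/3 * q) \<in> graphical_derivative S9 0 (0,0) q"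
  proof (rule gd_intro[of t wL])
    show "wL \<longlonglongrightarrow> (q, 4/3 * q, 2/3 * q)" using limL by (simp add: c_def phi_def)
    show "snd (t k *\<^sub>R wL k) \<in> S9 (fst (t k *\<^sub>R wL k))" for k
      unfolding sL using mem_L[OF ab(1)[of k]] by simp
  qed (use tp tl in auto)
  show "(4/3 * q, - (2/3) * q) \<in> graphical_derivative S9 0 (0,0) q"
  proof (rule gd_intro[of t wU])
    show "wU \<longlonglongrightarrow> (q, 4/3 * q, - (2/3) * q)" using limU by (simp add: c_def phi_def)
    show "snd (t k *\<^sub>R wU k) \<in> S9 (fst (t k *\<^sub>R wU k))" for k
      unfolding sU using mem_U[OF ab(1)[of k]] ab(2)[of k] by simp
  qed (use tp tl in auto)
qed

lemma gd_sup:
  assumes u: "u \<in> Eset q" shows "u \<in> graphical_derivative S9 0 (0,0) q"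
proof (cases "q \<le> 0")
  case False
  hence "u = (0,0)" using u by (simp add: Eset_def)
  thus ?thesis using False by (intro gd_simple) (auto intro!: mem_0)
next
  case True
  hence "u = (q, 0) \<or> u = (4/3 * q, - (2/3) * q) \<or> u = (4/3 * q, 2/3 * q)" using u by (simp add: Eset_def)
  thus ?thesis
  proof (elim disjE)
    assume u: "u = (q, 0)"
    show ?thesis unfolding u
    proof (rule gd_simple)
      fix t :: real assume t: "t > 0"
      show "t *\<^sub>R (q, 0) \<in> S9 (t * q)"
      proof (cases "q = 0")
        case True thus ?thesis using mem_0[of 0] by simp
      next
        case False
        hence "t * q < 0" using \<open>q \<le> 0\<close> t by (simp add: mult_pos_neg)
        thus ?thesis using mem_int by simp
      qed
    qed
  qed (use gd_branch[OF True] in auto)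
qed

lemma gd_eq: "graphical_derivative S9 0 (0,0) q = Eset q"
  using gd_sub gd_sup by blast

lemma cnc_iff: "\<xi> \<in> convex_normal_cone nonpos_orthant y \<longleftrightarrow>
   fst y \<le> 0 \<and> snd y \<le> 0 \<and> fst \<xi> \<ge> 0 \<and> snd \<xi> \<ge> 0 \<and> fst \<xi> * fst y = 0 \<and> snd \<xi> * snd y = 0"
proof -
  obtain y1 y2 where y: "y = (y1, y2)" by (cases y)
  obtain a b where x: "\<xi> = (a, b)" by (cases \<xi>)
  have "(y1 \<le> 0 \<and> y2 \<le> 0 \<and> (\<forall>z1 z2. z1 \<le> 0 \<longrightarrow> z2 \<le> 0 \<longrightarrow> a * (z1 - y1) + b * (z2 - y2) \<le> 0))
     \<longleftrightarrow> (y1 \<le> 0 \<and> y2 \<le> 0 \<and> a \<ge> 0 \<and> b \<ge> 0 \<and> a * y1 = 0 \<and> b * y2 = 0)" (is "?L \<longleftrightarrow> ?R")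
  proof
    assume L: ?L
    hence y0: "y1 \<le> 0" "y2 \<le> 0" by auto
    have h: "a * (z1 - y1) + b * (z2 - y2) \<le> 0" if "z1 \<le> 0" "z2 \<le> 0" for z1 z2 using L that by auto
    from h[of "y1 - 1" y2] y0 have "a \<ge> 0" by simp
    moreover from h[of y1 "y2 - 1"] y0 have "b \<ge> 0" by simp
    moreover from h[of 0 y2] y0 have "a * y1 \<ge> 0" by simp
    moreover from h[of y1 0] y0 have "b * y2 \<ge> 0" by simp
    moreover have "a * y1 \<le> 0" "b * y2 \<le> 0" using calculation y0 by (simp_all add: mult_nonneg_nonpos)
    ultimately show ?R using y0 by auto
  next
    assume R: ?R
    have "a * (z1 - y1) + b * (z2 - y2) \<le> 0" if "z1 \<le> 0" "z2 \<le> 0" for z1 z2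
    proof -
      have "a * z1 \<le> 0" "b * z2 \<le> 0" using R that by (simp_all add: mult_nonneg_nonpos)
      moreover have "a * y1 = 0" "b * y2 = 0" using R by auto
      moreover have "a * (z1 - y1) + b * (z2 - y2) = a * z1 - a * y1 + (b * z2 - b * y2)"
        by (simp add: algebra_simps)
      ultimately show ?thesis by linarith
    qed
    thus ?L using R by auto
  qed
  thus ?thesis unfolding convex_normal_cone_def nonpos_orthant_def x y
    by (auto simp: inner_prod_def)
qed

lemma Xi_eq: "{u. \<exists>\<xi>::real \<times> real.
          0 = - q + fst u + (0.5 * fst \<xi> + 0.5 * snd \<xi>) \<and>
          0 = - snd u + (- fst \<xi> + snd \<xi>) \<and>
          \<xi> \<in> convex_normal_cone nonpos_orthant
                 (0.5 * fst u - snd u, 0.5 * fst u + snd u)} = Eset q"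
proof (intro set_eqI iffI)
  fix u assume "u \<in> {u. \<exists>\<xi>::real \<times> real.
          0 = - q + fst u + (0.5 * fst \<xi> + 0.5 * snd \<xi>) \<and>
          0 = - snd u + (- fst \<xi> + snd \<xi>) \<and>
          \<xi> \<in> convex_normal_cone nonpos_orthant
                 (0.5 * fst u - snd u, 0.5 * fst u + snd u)}"
  then obtain a b where h: "0 = - q + fst u + (0.5 * a + 0.5 * b)" "0 = - snd u + (- a + b)"
    "(a, b) \<in> convex_normal_cone nonpos_orthant (0.5 * fst u - snd u, 0.5 * fst u + snd u)"
    by auto
  obtain u1 u2 where u: "u = (u1, u2)" by (cases u)
  have e: "q = u1 + a/2 + b/2" "u2 = b - a" using h by (simp_all add: u)
  have c: "u1/2 - u2 \<le> 0" "u1/2 + u2 \<le> 0" "a \<ge> 0" "b \<ge> 0" "a = 0 \<or> u1/2 - u2 = 0" "b = 0 \<or> u1/2 + u2 = 0"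
    using h(3) unfolding cnc_iff by (auto simp: u)
  from c(5,6) show "u \<in> Eset q"
  proof (elim disjE)
    assume "a = 0" "b = 0" thus ?thesis using e c by (simp add: Eset_def u)
  next
    assume "a = 0" "u1/2 + u2 = 0"
    hence "u1 = 4/3 * q" "u2 = - (2/3) * q" "q \<le> 0" using e c by linarith+
    thus ?thesis by (simp add: Eset_def u)
  next
    assume "u1/2 - u2 = 0" "b = 0"
    hence "u1 = 4/3 * q" "u2 = 2/3 * q" "q \<le> 0" using e c by linarith+
    thus ?thesis by (simp add: Eset_def u)
  next
    assume "u1/2 - u2 = 0" "u1/2 + u2 = 0"
    hence "u1 = 0" "u2 = 0" "q \<ge> 0" using e c by linarith+
    thus ?thesis by (simp add: Eset_def u)
  qed
next
  fix u assume u: "u \<in> Eset q"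
  have ex: "\<exists>a b. 0 = - q + fst u + (0.5 * a + 0.5 * b) \<and> 0 = - snd u + (- a + b) \<and>
     (a, b) \<in> convex_normal_cone nonpos_orthant (0.5 * fst u - snd u, 0.5 * fst u + snd u)"
  proof (cases "q \<le> 0")
    case False
    hence "u = (0,0)" using u by (simp add: Eset_def)
    thus ?thesis using False by (intro exI[of _ q] exI[of _ q]) (simp add: cnc_iff)
  next
    case True
    hence "u = (q, 0) \<or> u = (4/3 * q, - (2/3) * q) \<or> u = (4/3 * q, 2/3 * q)" using u by (simp add: Eset_def)
    thus ?thesis
    proof (elim disjE)
      assume "u = (q, 0)"
      thus ?thesis using True by (intro exI[of _ 0] exI[of _ 0]) (simp add: cnc_iff)
    next
      assume "u = (4/3 * q, - (2/3) * q)"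
      thus ?thesis using True by (intro exI[of _ 0] exI[of _ "- (2/3) * q"]) (simp add: cnc_iff)
    next
      assume "u = (4/3 * q, 2/3 * q)"
      thus ?thesis using True by (intro exI[of _ "- (2/3) * q"] exI[of _ 0]) (simp add: cnc_iff)
    qed
  qed
  thus "u \<in> {u. \<exists>\<xi>::real \<times> real.
          0 = - q + fst u + (0.5 * fst \<xi> + 0.5 * snd \<xi>) \<and>
          0 = - snd u + (- fst \<xi> + snd \<xi>) \<and>
          \<xi> \<in> convex_normal_cone nonpos_orthant
                 (0.5 * fst u - snd u, 0.5 * fst u + snd u)}" by auto
qed

theorem mainTheorem9:
  shows "aubin_property S9 0 (0, 0) \<and>
    (\<forall>q::real. graphical_derivative S9 0 (0, 0) q =
       {u. \<exists>\<xi>::real \<times> real.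
          0 = - q + fst u + (0.5 * fst \<xi> + 0.5 * snd \<xi>) \<and>
          0 = - snd u + (- fst \<xi> + snd \<xi>) \<and>
          \<xi> \<in> convex_normal_cone nonpos_orthant
                 (0.5 * fst u - snd u, 0.5 * fst u + snd u)}) \<and>
    (\<forall>q::real. q \<le> 0 \<longrightarrow> graphical_derivative S9 0 (0, 0) q =
       {(q, 0), (4/3 * q, - (2/3) * q), (4/3 * q, 2/3 * q)}) \<and>
    (\<forall>q::real. q \<ge> 0 \<longrightarrow> graphical_derivative S9 0 (0, 0) q = {(0, 0)})"
proof (intro conjI allI impI)
  show "aubin_property S9 0 (0, 0)" by (rule aubin)
next
  fix q :: real
  show "graphical_derivative S9 0 (0, 0) q = {u. \<exists>\<xi>::real \<times> real.
          0 = - q + fst u + (0.5 * fst \<xi> + 0.5 * snd \<xi>) \<and>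
          0 = - snd u + (- fst \<xi> + snd \<xi>) \<and>
          \<xi> \<in> convex_normal_cone nonpos_orthant
                 (0.5 * fst u - snd u, 0.5 * fst u + snd u)}"
    unfolding gd_eq Xi_eq ..
next
  fix q :: real assume "q \<le> 0"
  thus "graphical_derivative S9 0 (0, 0) q = {(q, 0), (4/3 * q, - (2/3) * q), (4/3 * q, 2/3 * q)}"
    by (simp add: gd_eq Eset_def)
next
  fix q :: real assume "q \<ge> 0"
  thus "graphical_derivative S9 0 (0, 0) q = {(0, 0)}"
    by (cases "q = 0") (auto simp: gd_eq Eset_def)
qed

end
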